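(* Let $f,\tilde f,g,\tilde g,h,\tilde h,b,c$ be functions of two variables satisfying $b(u,v)=c(u,v)$, $g(u,v)=h(u,v)$, $\tilde g(u,v)=\tilde h(u,v)$. Let $q(n_1,n_2;y,z)$, $(n_1,n_2)\in\mathbb Z^2$, satisfy for all $y,z$ the 7-point equation $$f(q,q_{1,0})-\tilde f(q,q_{-1,0})+g(q,q_{0,1})-\tilde g(q,q_{0,-1})+h(q,q_{-1,-1})-\tilde h(q,q_{1,1})=0$$ at every site, together with the flows $$q_{,y}=b\bigl(q,-\tilde f(q,q_{-1,0})+g(q,q_{0,1})-\tilde h(q,q_{1,1})\bigr)=b\bigl(q,-f(q,q_{1,0})+\tilde g(q,q_{0,-1})-h(q,q_{-1,-1})\bigr),$$ $$q_{,z}=c\bigl(q,-\tilde f(q,q_{-1,0})-\tilde g(q,q_{0,-1})+h(q,q_{-1,-1})\bigr)=c\bigl(q,-f(q,q_{1,0})-g(q,q_{0,1})+\tilde h(q,q_{1,1})\bigr).$$ Fix an integer $j$ and set $u(2k)=q(k,j)$, $u(2k-1)=q(k,j+1)$ for $k\in\mathbb Z$. Then $u_{,t}:=u_{,y}+u_{,z}$ satisfies, at every $n\in\mathbb Z$ (both even and odd), the autonomous equation $$u_{,t}=b\bigl(u,-\tilde f(u,u_{-2})+g(u,u_{-1})-\tilde g(u,u_1)\bigr)+b\bigl(u,-f(u,u_2)-g(u,u_{-1})+\tilde g(u,u_1)\bigr),$$ where $u=u(n)$, $u_m=u(n+m)$.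
   Context: Notation: $q_{i,j}=q(n_1+i,n_2+j)$; subscripts ${,y},{,z},{,t}$ denote derivatives in $y,z,t$. *)

theory Defs
  imports "HOL-Analysis.Analysis"
begin

definition chain_u :: "(int \<Rightarrow> int \<Rightarrow> real \<Rightarrow> real \<Rightarrow> real) \<Rightarrow> int \<Rightarrow> int \<Rightarrow> real \<Rightarrow> real \<Rightarrow> real" where
  "chain_u q j m y z = (if even m then q (m div 2) j y z else q ((m + 1) div 2) (j + 1) y z)"

end

theory Submission
  imports Defs
begin

theorem mainTheorem2:
  fixes f ft g gt h ht b c :: "real \<Rightarrow> real \<Rightarrow> real"
    and q :: "int \<Rightarrow> int \<Rightarrow> real \<Rightarrow> real \<Rightarrow> real"
    and j :: int
  assumes bc: "\<And>u v. b u v = c u v"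
    and gh: "\<And>u v. g u v = h u v"
    and gth: "\<And>u v. gt u v = ht u v"
    and lattice: "\<And>n1 n2 y z.
        f (q n1 n2 y z) (q (n1+1) n2 y z) - ft (q n1 n2 y z) (q (n1-1) n2 y z)
      + g (q n1 n2 y z) (q n1 (n2+1) y z) - gt (q n1 n2 y z) (q n1 (n2-1) y z)
      + h (q n1 n2 y z) (q (n1-1) (n2-1) y z) - ht (q n1 n2 y z) (q (n1+1) (n2+1) y z) = 0"
    and flow_y: "\<And>n1 n2 y z. ((\<lambda>s. q n1 n2 s z) has_real_derivative
        b (q n1 n2 y z) (- ft (q n1 n2 y z) (q (n1-1) n2 y z) + g (q n1 n2 y z) (q n1 (n2+1) y z)
                         - ht (q n1 n2 y z) (q (n1+1) (n2+1) y z))) (at y)"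
    and flow_y_eq: "\<And>n1 n2 y z.
        b (q n1 n2 y z) (- ft (q n1 n2 y z) (q (n1-1) n2 y z) + g (q n1 n2 y z) (q n1 (n2+1) y z)
                         - ht (q n1 n2 y z) (q (n1+1) (n2+1) y z))
      = b (q n1 n2 y z) (- f (q n1 n2 y z) (q (n1+1) n2 y z) + gt (q n1 n2 y z) (q n1 (n2-1) y z)
                         - h (q n1 n2 y z) (q (n1-1) (n2-1) y z))"
    and flow_z: "\<And>n1 n2 y z. ((\<lambda>s. q n1 n2 y s) has_real_derivative
        c (q n1 n2 y z) (- ft (q n1 n2 y z) (q (n1-1) n2 y z) - gt (q n1 n2 y z) (q n1 (n2-1) y z)
                         + h (q n1 n2 y z) (q (n1-1) (n2-1) y z))) (at z)"
    and flow_z_eq: "\<And>n1 n2 y z.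
        c (q n1 n2 y z) (- ft (q n1 n2 y z) (q (n1-1) n2 y z) - gt (q n1 n2 y z) (q n1 (n2-1) y z)
                         + h (q n1 n2 y z) (q (n1-1) (n2-1) y z))
      = c (q n1 n2 y z) (- f (q n1 n2 y z) (q (n1+1) n2 y z) - g (q n1 n2 y z) (q n1 (n2+1) y z)
                         + ht (q n1 n2 y z) (q (n1+1) (n2+1) y z))"
  shows "\<forall>n y z.
      deriv (\<lambda>s. chain_u q j n s z) y + deriv (\<lambda>s. chain_u q j n y s) z
    = b (chain_u q j n y z) (- ft (chain_u q j n y z) (chain_u q j (n-2) y z)
                             + g (chain_u q j n y z) (chain_u q j (n-1) y z)
                             - gt (chain_u q j n y z) (chain_u q j (n+1) y z))
    + b (chain_u q j n y z) (- f (chain_u q j n y z) (chain_u q j (n+2) y z)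
                             - g (chain_u q j n y z) (chain_u q j (n-1) y z)
                             + gt (chain_u q j n y z) (chain_u q j (n+1) y z))"
proof (intro allI)
  fix n :: int and y z :: real
  have cu: "\<And>m y z. chain_u q j m y z = (if even m then q (m div 2) j y z else q ((m + 1) div 2) (j + 1) y z)"
    by (simp add: chain_u_def)
  show "deriv (\<lambda>s. chain_u q j n s z) y + deriv (\<lambda>s. chain_u q j n y s) z
    = b (chain_u q j n y z) (- ft (chain_u q j n y z) (chain_u q j (n-2) y z)
                             + g (chain_u q j n y z) (chain_u q j (n-1) y z)
                             - gt (chain_u q j n y z) (chain_u q j (n+1) y z))
    + b (chain_u q j n y z) (- f (chain_u q j n y z) (chain_u q j (n+2) y z)
                             - g (chain_u q j n y z) (chain_u q j (n-1) y z)
                             + gt (chain_u q j n y z) (chain_u q j (n+1) y z))"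
  proof (cases "even n")
    case True
    then obtain k where n: "n = 2*k" by (auto elim: evenE)
    have e1: "\<And>s t. chain_u q j n s t = q k j s t" using n by (simp add: cu)
    have e2: "chain_u q j (n-2) y z = q (k-1) j y z" using n
      by (simp add: cu; smt (verit) nonzero_mult_div_cancel_left)
    have e3: "chain_u q j (n-1) y z = q k (j+1) y z" using n by (simp add: cu)
    have e4: "chain_u q j (n+1) y z = q (k+1) (j+1) y z" using n
      by (simp add: cu; smt (verit) nonzero_mult_div_cancel_left)
    have e5: "chain_u q j (n+2) y z = q (k+1) j y z" using n
      by (simp add: cu; smt (verit) nonzero_mult_div_cancel_left)
    have d1: "deriv (\<lambda>s. chain_u q j n s z) y = b (q k j y z) (- ft (q k j y z) (q (k-1) j y z) + g (q k j y z) (q k (j+1) y z)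
                         - ht (q k j y z) (q (k+1) (j+1) y z))"
      unfolding e1 by (rule DERIV_imp_deriv) (rule flow_y)
    have d2: "deriv (\<lambda>s. chain_u q j n y s) z = c (q k j y z) (- f (q k j y z) (q (k+1) j y z) - g (q k j y z) (q k (j+1) y z)
                         + ht (q k j y z) (q (k+1) (j+1) y z))"
      unfolding e1 by (rule DERIV_imp_deriv) (simp only: flow_z_eq[symmetric] flow_z)
    show ?thesis unfolding d1 d2 unfolding e1 e2 e3 e4 e5 by (simp only: bc gth)
  next
    case False
    define k where "k = (n + 1) div 2"
    have n: "n = 2*k - 1" using False unfolding k_def by presburger
    have e1: "\<And>s t. chain_u q j n s t = q k (j+1) s t" using n by (simp add: cu)
    have e2: "chain_u q j (n-2) y z = q (k-1) (j+1) y z" using n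
      by (simp add: cu; smt (verit) nonzero_mult_div_cancel_left)
    have e3: "chain_u q j (n-1) y z = q (k-1) j y z" using n
      by (simp add: cu; smt (verit) nonzero_mult_div_cancel_left)
    have e4: "chain_u q j (n+1) y z = q k j y z" using n by (simp add: cu)
    have e5: "chain_u q j (n+2) y z = q (k+1) (j+1) y z" using n
      by (simp add: cu; smt (verit) nonzero_mult_div_cancel_left)
    have d1: "deriv (\<lambda>s. chain_u q j n s z) y = b (q k (j+1) y z) (- f (q k (j+1) y z) (q (k+1) (j+1) y z) + gt (q k (j+1) y z) (q k (j+1-1) y z)
                         - h (q k (j+1) y z) (q (k-1) (j+1-1) y z))"
      unfolding e1 by (rule DERIV_imp_deriv) (simp only: flow_y_eq[symmetric] flow_y)
    have d2: "deriv (\<lambda>s. chain_u q j n y s) z = c (q k (j+1) y z) (- ft (q k (j+1) y z) (q (k-1) (j+1) y z) - gt (q k (j+1) y z) (q k (j+1-1) y z)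
                         + h (q k (j+1) y z) (q (k-1) (j+1-1) y z))"
      unfolding e1 by (rule DERIV_imp_deriv) (rule flow_z)
    show ?thesis unfolding d1 d2 unfolding e1 e2 e3 e4 e5 by (simp only: bc gh add_diff_cancel_right') (simp add: algebra_simps)
  qed
qed

end
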